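(* For each positive integer $N$, consider a lattice system with Hilbert space $\mathcal{H}^{(N)}=\bigotimes_{i=1}^N\mathcal{H}_i$, $\dim\mathcal{H}_i=d\ge2$ (so $D=d^N$), equipped with self-adjoint $\hat H^{(N)},\hat H'^{(N)}$, a density operator $\hat\rho^{0,(N)}$ and a unitary $\hat V^{(N)}$, such that: (A) the spectra $\{E_n\}$ of $\hat H^{(N)}$ and $\{E'_n\}$ of $\hat H'^{(N)}$ are non-degenerate; (B) if $E_k-E_l=E_m-E_n\ne0$ then $k=m$, $l=n$, and likewise for $\{E'_n\}$; and there is $c>0$ with $D_{\mathrm{eff}}=\bigl[\sum_n(\rho^0_{nn})^2\bigr]^{-1}\ge e^{cN}$ for all $N$. Then $\mathrm{Prob}[S_0\lesssim S'(\tau)]\sim1$; precisely, for every $\varepsilon>0$, $$\lim_{N\to\infty}\mathrm{Prob}\left[S'(\tau)\ge S_0-\varepsilon N\right]=1 .$$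
   Context: With $\{|E_n\rangle\}$, $\{|E'_n\rangle\}$ the eigenbases of $\hat H^{(N)},\hat H'^{(N)}$, $\rho^0_{kl}=\langle E_k|\hat\rho^{0,(N)}|E_l\rangle$, $U_{mn}=\langle E'_m|\hat V^{(N)}|E_n\rangle$, $\hbar>0$: $\rho'_{nn}(\tau)=\sum_{k,l}U_{nk}U_{nl}^*e^{-\mathrm{i}(E_k-E_l)\tau/\hbar}\rho^0_{kl}$, $S_0=-\sum_n\rho^0_{nn}\ln\rho^0_{nn}$, $S'(\tau)=-\sum_n\rho'_{nn}(\tau)\ln\rho'_{nn}(\tau)$ (convention $0\ln0=0$). $\mathrm{Prob}[P(\tau)]$ is the probability for $\tau$ uniformly distributed over $\tau\ge0$, i.e. $\lim_{T\to\infty}T^{-1}|\{\tau\in[0,T]:P(\tau)\}|$. The notations $\lesssim$ and $\sim$ mean $\le$ and $=$ with terms sub-leading in $N$ ignored. *)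

theory Defs
  imports "HOL-Analysis.Analysis"
begin

text \<open>Finite-dimensional objects of dimension D are represented in coordinates
  as functions on indices 0..<D (matrix entries in the relevant eigenbases).\<close>

definition nondegenerate_spectrum :: "nat \<Rightarrow> (nat \<Rightarrow> real) \<Rightarrow> bool" where
  "nondegenerate_spectrum D E \<longleftrightarrow> inj_on E {..<D}"

definition nondegenerate_gaps :: "nat \<Rightarrow> (nat \<Rightarrow> real) \<Rightarrow> bool" where
  "nondegenerate_gaps D E \<longleftrightarrow>
     (\<forall>k<D. \<forall>l<D. \<forall>m<D. \<forall>n<D.
        E k - E l = E m - E n \<and> E k - E l \<noteq> 0 \<longrightarrow> k = m \<and> l = n)"

definition density_matrix :: "nat \<Rightarrow> (nat \<Rightarrow> nat \<Rightarrow> complex) \<Rightarrow> bool" where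
  "density_matrix D \<rho> \<longleftrightarrow>
     (\<forall>k<D. \<forall>l<D. \<rho> k l = cnj (\<rho> l k)) \<and>
     (\<forall>v :: nat \<Rightarrow> complex. Re (\<Sum>k<D. \<Sum>l<D. cnj (v k) * \<rho> k l * v l) \<ge> 0) \<and>
     (\<Sum>n<D. \<rho> n n) = 1"

definition unitary_matrix :: "nat \<Rightarrow> (nat \<Rightarrow> nat \<Rightarrow> complex) \<Rightarrow> bool" where
  "unitary_matrix D U \<longleftrightarrow>
     (\<forall>k<D. \<forall>l<D. (\<Sum>m<D. cnj (U m k) * U m l) = (if k = l then 1 else 0))"

text \<open>Diagonal elements of the evolved state in the eigenbasis of H'.\<close>
definition rho_prime_diag ::
  "nat \<Rightarrow> real \<Rightarrow> (nat \<Rightarrow> real) \<Rightarrow> (nat \<Rightarrow> nat \<Rightarrow> complex) \<Rightarrow> (nat \<Rightarrow> nat \<Rightarrow> complex)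
   \<Rightarrow> real \<Rightarrow> nat \<Rightarrow> real" where
  "rho_prime_diag D hbar E U \<rho> \<tau> n =
     Re (\<Sum>k<D. \<Sum>l<D. U n k * cnj (U n l)
          * exp (- \<i> * complex_of_real ((E k - E l) * \<tau> / hbar)) * \<rho> k l)"

text \<open>Shannon entropy of a distribution on 0..<D (0 * ln 0 = 0 automatically).\<close>
definition diag_entropy :: "nat \<Rightarrow> (nat \<Rightarrow> real) \<Rightarrow> real" where
  "diag_entropy D p = - (\<Sum>n<D. p n * ln (p n))"

definition time_fraction :: "(real \<Rightarrow> bool) \<Rightarrow> real \<Rightarrow> real" where
  "time_fraction P T = measure lborel {\<tau> \<in> {0..T}. P \<tau>} / T"

end

theory Submission
  imports Defs "HOL-Real_Asymp.Real_Asymp"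
begin

lemma integral_cos_lin:
  fixes w T :: real assumes "w \<noteq> 0" "T \<ge> 0"
  shows "((\<lambda>t. cos (w * t)) has_integral (sin (w*T)/w)) {0..T}"
proof -
  have "((\<lambda>t. cos (w * t)) has_integral (sin (w*T)/w - sin (w*0)/w)) {0..T}"
    apply (rule fundamental_theorem_of_calculus)
    using assms apply simp
    apply (simp only: has_real_derivative_iff_has_vector_derivative[symmetric])
    apply (rule derivative_eq_intros refl | use assms in simp)+
    done
  then show ?thesis by simp
qed

lemma integral_sin_lin:
  fixes w T :: real assumes "w \<noteq> 0" "T \<ge> 0"
  shows "((\<lambda>t. sin (w * t)) has_integral (1/w - cos (w*T)/w)) {0..T}"
proof -
  have "((\<lambda>t. sin (w * t)) has_integral ((- cos (w*T)/w) - (- cos (w*0)/w))) {0..T}"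
    apply (rule fundamental_theorem_of_calculus)
    using assms apply simp
    apply (simp only: has_real_derivative_iff_has_vector_derivative[symmetric])
    apply (rule derivative_eq_intros refl | use assms in simp)+
    done
  then show ?thesis by (simp add: field_simps)
qed

definition avg :: "(real \<Rightarrow> real) \<Rightarrow> real \<Rightarrow> real" where
  "avg f T = integral {0..T} f / T"

lemma avg_trig:
  fixes a b w :: real
  shows "((\<lambda>T. avg (\<lambda>t. a * cos (w*t) + b * sin (w*t)) T) \<longlongrightarrow> (if w = 0 then a else 0)) at_top"
proof (cases "w = 0")
  case True
  have "eventually (\<lambda>T. a = avg (\<lambda>t. a * cos (w*t) + b * sin (w*t)) T) at_top"
    using eventually_gt_at_top[of 0]
  proof eventually_elim
    case (elim T)
    have "integral {0..T} (\<lambda>t. a * cos (w*t) + b * sin (w*t)) = integral {0..T} (\<lambda>t. a)"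
      using True by simp
    also have "\<dots> = a * T" using elim by simp
    finally show ?case using elim by (simp add: avg_def)
  qed
  from tendsto_cong[OF this, of a] True show ?thesis by simp
next
  case False
  have ev: "eventually (\<lambda>T. (a * (sin (w*T)/w) + b * (1/w - cos (w*T)/w)) / T
        = avg (\<lambda>t. a * cos (w*t) + b * sin (w*t)) T) at_top"
    using eventually_gt_at_top[of 0]
  proof eventually_elim
    case (elim T)
    have "((\<lambda>t. a * cos (w*t) + b * sin (w*t)) has_integral
          (a * (sin (w*T)/w) + b * (1/w - cos (w*T)/w))) {0..T}"
      using integral_cos_lin[OF False, of T] integral_sin_lin[OF False, of T] elim
      by (intro has_integral_add has_integral_mult_right) auto
    then show ?case by (simp add: avg_def integral_unique)
  qed
  have "((\<lambda>T. (a * (sin (w*T)/w) + b * (1/w - cos (w*T)/w)) / T) \<longlongrightarrow> 0) at_top"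
  proof (rule Lim_null_comparison)
    show "\<forall>\<^sub>F T in at_top. norm ((a * (sin (w*T)/w) + b * (1/w - cos (w*T)/w)) / T)
          \<le> (\<bar>a\<bar> + 2 * \<bar>b\<bar>) / \<bar>w\<bar> / T"
      using eventually_gt_at_top[of 0]
    proof eventually_elim
      case (elim T)
      have "\<bar>a * (sin (w*T)/w) + b * (1/w - cos (w*T)/w)\<bar> \<le> (\<bar>a\<bar> + 2 * \<bar>b\<bar>) / \<bar>w\<bar>"
      proof -
        have s: "\<bar>sin (w*T)\<bar> \<le> 1" "\<bar>cos (w*T)\<bar> \<le> 1" by auto
        have "\<bar>a * (sin (w*T)/w) + b * (1/w - cos (w*T)/w)\<bar>
            = \<bar>a * sin (w*T) + b * (1 - cos (w*T))\<bar> / \<bar>w\<bar>"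
          using False by (simp add: field_simps abs_divide)
        also have "\<bar>a * sin (w*T) + b * (1 - cos (w*T))\<bar> \<le> \<bar>a\<bar> + 2 * \<bar>b\<bar>"
        proof -
          have "\<bar>a * sin (w*T)\<bar> \<le> \<bar>a\<bar>" using s by (simp add: abs_mult mult_left_le)
          moreover have "\<bar>b * (1 - cos (w*T))\<bar> \<le> 2 * \<bar>b\<bar>"
          proof -
            have "\<bar>1 - cos (w*T)\<bar> \<le> 2" using s by linarith
            then show ?thesis by (simp add: abs_mult mult_left_mono mult.commute)
          qed
          ultimately show ?thesis by linarith
        qed
        hence "\<bar>a * sin (w*T) + b * (1 - cos (w*T))\<bar> / \<bar>w\<bar> \<le> (\<bar>a\<bar> + 2 * \<bar>b\<bar>) / \<bar>w\<bar>"
          by (simp add: divide_right_mono)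
        finally show ?thesis .
      qed
      then show ?case using elim by (simp add: abs_divide divide_right_mono flip: divide_divide_eq_left)
    qed
    show "((\<lambda>T. (\<bar>a\<bar> + 2 * \<bar>b\<bar>) / \<bar>w\<bar> / T) \<longlongrightarrow> 0) at_top" by real_asymp
  qed
  then show ?thesis using False tendsto_cong[OF ev] by simp
qed

lemma avg_sum:
  assumes "finite I" "\<And>i. i \<in> I \<Longrightarrow> continuous_on UNIV (f i)"
    "\<And>i. i \<in> I \<Longrightarrow> ((\<lambda>T. avg (f i) T) \<longlongrightarrow> L i) at_top"
  shows "((\<lambda>T. avg (\<lambda>t. \<Sum>i\<in>I. f i t) T) \<longlongrightarrow> (\<Sum>i\<in>I. L i)) at_top"
proof -
  have "avg (\<lambda>t. \<Sum>i\<in>I. f i t) T = (\<Sum>i\<in>I. avg (f i) T)" for T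
  proof -
    have "integral {0..T} (\<lambda>t. \<Sum>i\<in>I. f i t) = (\<Sum>i\<in>I. integral {0..T} (f i))"
      using assms(1,2)
      by (intro integral_sum) (auto intro: integrable_continuous_interval continuous_on_subset)
    then show ?thesis by (simp add: avg_def sum_divide_distrib)
  qed
  then show ?thesis using assms by (simp add: tendsto_sum)
qed

lemma markov_time:
  fixes F :: "real \<Rightarrow> real" and a T :: real
  assumes T: "T \<ge> 0" and a: "a > 0" and cont: "continuous_on UNIV F" and nn: "\<And>t. F t \<ge> 0"
  shows "{t \<in> {0..T}. a \<le> F t} \<in> sets lborel"
    and "measure lborel {t \<in> {0..T}. a \<le> F t} \<le> integral {0..T} F / a"
proof -
  let ?S = "{t \<in> {0..T}. a \<le> F t}"
  have "closed {t. a \<le> F t}" by (intro closed_Collect_le continuous_on_const cont)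
  moreover have "?S = {0..T} \<inter> {t. a \<le> F t}" by blast
  ultimately have "closed ?S" by (metis closed_Int closed_atLeastAtMost)
  then show S: "?S \<in> sets lborel" by (simp add: borel_closed)
  have "emeasure lborel ?S \<le> emeasure lborel {0..T}"
    by (rule emeasure_mono) auto
  also have "\<dots> < \<infinity>" using T by simp
  finally have fin: "emeasure lborel ?S < \<infinity>" .
  have "((\<lambda>x. 1) has_integral measure lborel ?S) ?S"
    using S fin by (intro has_integral_measure_lborel) auto
  then have "((\<lambda>x. a) has_integral a * measure lborel ?S) ?S"
    using has_integral_mult_right[of "\<lambda>x. 1::real" _ ?S a] by simp
  then have h1: "((\<lambda>x. if x \<in> ?S then a else 0) has_integral a * measure lborel ?S) {0..T}"
    by (subst has_integral_restrict) auto
  have h2: "(F has_integral integral {0..T} F) {0..T}"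
    using cont by (intro integrable_integral integrable_continuous_interval continuous_on_subset[OF cont]) auto
  have "a * measure lborel ?S \<le> integral {0..T} F"
    using h1 h2 by (rule has_integral_le) (simp add: nn)
  then show "measure lborel ?S \<le> integral {0..T} F / a"
    using a by (simp add: field_simps)
qed

definition QF :: "nat \<Rightarrow> (nat \<Rightarrow> nat \<Rightarrow> complex) \<Rightarrow> (nat \<Rightarrow> complex) \<Rightarrow> real" where
  "QF D \<rho> v = Re (\<Sum>k<D. \<Sum>l<D. cnj (v k) * \<rho> k l * v l)"

definition QX :: "nat set \<Rightarrow> (nat \<Rightarrow> nat \<Rightarrow> complex) \<Rightarrow> (nat \<Rightarrow> complex) \<Rightarrow> real" where
  "QX X \<rho> v = Re (\<Sum>k\<in>X. \<Sum>l\<in>X. cnj (v k) * \<rho> k l * v l)"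

lemma sum_if_restrict:
  fixes D :: nat
  assumes "X \<subseteq> {..<D}"
  shows "(\<Sum>k<D. if k \<in> X then g k else 0) = (\<Sum>k\<in>X. g k)"
proof -
  have "(\<Sum>k<D. if k \<in> X then g k else 0) = sum g {k\<in>{..<D}. k \<in> X}"
    by (rule sum.inter_filter[symmetric]) simp
  also have "{k\<in>{..<D}. k \<in> X} = X" using assms by blast
  finally show ?thesis .
qed

lemma QF_restrict:
  assumes "X \<subseteq> {..<D}"
  shows "QF D \<rho> (\<lambda>k. if k \<in> X then v k else 0) = QX X \<rho> v"
proof -
  have "(\<Sum>k<D. \<Sum>l<D. cnj (if k \<in> X then v k else 0) * \<rho> k l * (if l \<in> X then v l else 0))
      = (\<Sum>k<D. if k \<in> X then (\<Sum>l<D. if l \<in> X then cnj (v k) * \<rho> k l * v l else 0) else 0)"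
    by (intro sum.cong refl) (auto intro!: sum.cong)
  also have "\<dots> = (\<Sum>k\<in>X. \<Sum>l\<in>X. cnj (v k) * \<rho> k l * v l)"
    using assms by (simp add: sum_if_restrict)
  finally show ?thesis by (simp add: QF_def QX_def)
qed

lemma psd_QF:
  assumes "density_matrix D \<rho>"
  shows "QF D \<rho> v \<ge> 0"
proof -
  have "\<forall>v :: nat \<Rightarrow> complex. Re (\<Sum>k<D. \<Sum>l<D. cnj (v k) * \<rho> k l * v l) \<ge> 0"
    using assms unfolding density_matrix_def by blast
  then show ?thesis unfolding QF_def by blast
qed

lemma QX_nonneg:
  assumes "density_matrix D \<rho>" "X \<subseteq> {..<D}"
  shows "QX X \<rho> v \<ge> 0"
  using psd_QF[OF assms(1)] QF_restrict[OF assms(2), of \<rho> v] by metis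

lemma QF_split:
  assumes "density_matrix D \<rho>" "s > 0"
  shows "QF D \<rho> (\<lambda>k. x k + y k) \<le> (1 + s) * QF D \<rho> x + (1 + 1/s) * QF D \<rho> y"
proof -
  let ?a = "complex_of_real (sqrt s)" and ?b = "complex_of_real (1 / sqrt s)"
  have ss: "sqrt s * sqrt s = s" "sqrt s > 0" using assms(2) by auto
  have ab: "cnj ?a = ?a" "cnj ?b = ?b" "?a * ?a = of_real s" "?b * ?b = of_real (1/s)" "?a * ?b = 1"
  proof -
    show "cnj ?a = ?a" "cnj ?b = ?b" by simp_all
    show "?a * ?a = of_real s" using ss by (simp flip: of_real_mult)
    show "?b * ?b = of_real (1/s)" using ss by (simp flip: of_real_mult)
    show "?a * ?b = 1" using ss by (simp flip: of_real_mult)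
  qed
  have pt: "cnj (x k + y k) * r * (x l + y l) + cnj (?a * x k - ?b * y k) * r * (?a * x l - ?b * y l)
      = of_real (1 + s) * (cnj (x k) * r * x l) + of_real (1 + 1/s) * (cnj (y k) * r * y l)" for k l r
  proof -
    have cc: "cnj (?a * x k - ?b * y k) = ?a * cnj (x k) - ?b * cnj (y k)" using ab by simp
    have "cnj (x k + y k) * r * (x l + y l) + cnj (?a * x k - ?b * y k) * r * (?a * x l - ?b * y l)
      = (1 + ?a * ?a) * (cnj (x k) * r * x l) + (1 + ?b * ?b) * (cnj (y k) * r * y l)
        + (1 - ?a * ?b) * (cnj (x k) * r * y l) + (1 - ?a * ?b) * (cnj (y k) * r * x l)"
      unfolding cc complex_cnj_add by algebra
    also have "\<dots> = of_real (1 + s) * (cnj (x k) * r * x l) + of_real (1 + 1/s) * (cnj (y k) * r * y l)"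
      using ab by simp
    finally show ?thesis .
  qed
  have nn: "QF D \<rho> (\<lambda>k. ?a * x k - ?b * y k) \<ge> 0"
    by (rule psd_QF[OF assms(1)])
  have "QF D \<rho> (\<lambda>k. x k + y k) + QF D \<rho> (\<lambda>k. ?a * x k - ?b * y k)
      = Re (\<Sum>k<D. \<Sum>l<D. cnj (x k + y k) * \<rho> k l * (x l + y l) + cnj (?a * x k - ?b * y k) * \<rho> k l * (?a * x l - ?b * y l))"
    by (simp add: QF_def sum.distrib)
  also have "\<dots> = Re (\<Sum>k<D. \<Sum>l<D. of_real (1 + s) * (cnj (x k) * \<rho> k l * x l) + of_real (1 + 1/s) * (cnj (y k) * \<rho> k l * y l))"
    by (simp only: pt)
  also have "\<dots> = (1 + s) * QF D \<rho> x + (1 + 1/s) * QF D \<rho> y"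
    by (simp add: QF_def sum.distrib flip: sum_distrib_left)
  finally show ?thesis using nn by linarith
qed

definition vv :: "(nat \<Rightarrow> nat \<Rightarrow> complex) \<Rightarrow> (nat \<Rightarrow> real) \<Rightarrow> real \<Rightarrow> real \<Rightarrow> nat \<Rightarrow> nat \<Rightarrow> complex" where
  "vv U E hbar \<tau> n = (\<lambda>k. cnj (U n k) * exp (\<i> * complex_of_real (E k * \<tau> / hbar)))"

definition ph :: "(nat \<Rightarrow> real) \<Rightarrow> real \<Rightarrow> real \<Rightarrow> nat \<Rightarrow> nat \<Rightarrow> complex" where
  "ph E hbar \<tau> k l = exp (- \<i> * complex_of_real ((E k - E l) * \<tau> / hbar))"

lemma vv_prod:
  "cnj (vv U E hbar \<tau> n k) * r * vv U E hbar \<tau> n l = U n k * cnj (U n l) * ph E hbar \<tau> k l * r"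
proof -
  have c: "cnj (exp (\<i> * complex_of_real x)) = exp (- \<i> * complex_of_real x)" for x
    by (simp add: exp_cnj)
  have e: "exp (- \<i> * complex_of_real (E k * \<tau> / hbar)) * exp (\<i> * complex_of_real (E l * \<tau> / hbar))
      = ph E hbar \<tau> k l"
    unfolding ph_def
    by (simp add: exp_add[symmetric] left_diff_distrib diff_divide_distrib algebra_simps)
  have "cnj (vv U E hbar \<tau> n k) = U n k * exp (- \<i> * complex_of_real (E k * \<tau> / hbar))"
    unfolding vv_def by (simp only: complex_cnj_mult complex_cnj_cnj c)
  then show ?thesis unfolding vv_def e[symmetric] by algebra
qed

lemma ph_same[simp]: "ph E hbar \<tau> k k = 1"
  by (simp add: ph_def)

lemma rpd_QF: "rho_prime_diag D hbar E U \<rho> \<tau> n = QF D \<rho> (vv U E hbar \<tau> n)"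
  unfolding rho_prime_diag_def QF_def vv_prod ph_def by (simp add: mult_ac)

lemma unitary_col:
  assumes "unitary_matrix D U" "k < D" "l < D"
  shows "(\<Sum>n<D. U n k * cnj (U n l)) = (if k = l then 1 else 0)"
proof -
  have "(\<Sum>m<D. cnj (U m l) * U m k) = (if l = k then 1 else 0)"
    using assms unfolding unitary_matrix_def by blast
  then show ?thesis by (auto simp: mult.commute)
qed

lemma QX_total:
  assumes U: "unitary_matrix D U" and X: "X \<subseteq> {..<D}"
  shows "(\<Sum>n<D. QX X \<rho> (vv U E hbar \<tau> n)) = (\<Sum>k\<in>X. Re (\<rho> k k))"
proof -
  have fin: "finite X" using X finite_subset by blast
  have "(\<Sum>n<D. QX X \<rho> (vv U E hbar \<tau> n))
      = Re (\<Sum>n<D. \<Sum>k\<in>X. \<Sum>l\<in>X. U n k * cnj (U n l) * ph E hbar \<tau> k l * \<rho> k l)"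
    unfolding QX_def vv_prod by (simp add: Re_sum)
  also have "(\<Sum>n<D. \<Sum>k\<in>X. \<Sum>l\<in>X. U n k * cnj (U n l) * ph E hbar \<tau> k l * \<rho> k l)
      = (\<Sum>k\<in>X. \<Sum>l\<in>X. (\<Sum>n<D. U n k * cnj (U n l)) * (ph E hbar \<tau> k l * \<rho> k l))"
  proof -
    have "(\<Sum>n<D. \<Sum>k\<in>X. \<Sum>l\<in>X. U n k * cnj (U n l) * ph E hbar \<tau> k l * \<rho> k l)
      = (\<Sum>k\<in>X. \<Sum>n<D. \<Sum>l\<in>X. U n k * cnj (U n l) * ph E hbar \<tau> k l * \<rho> k l)"
      by (rule sum.swap)
    also have "\<dots> = (\<Sum>k\<in>X. \<Sum>l\<in>X. \<Sum>n<D. U n k * cnj (U n l) * ph E hbar \<tau> k l * \<rho> k l)"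
      by (rule sum.cong[OF refl], rule sum.swap)
    also have "\<dots> = (\<Sum>k\<in>X. \<Sum>l\<in>X. (\<Sum>n<D. U n k * cnj (U n l)) * (ph E hbar \<tau> k l * \<rho> k l))"
      by (simp add: sum_distrib_right mult.assoc)
    finally show ?thesis .
  qed
  also have "\<dots> = (\<Sum>k\<in>X. \<Sum>l\<in>X. (if k = l then ph E hbar \<tau> k l * \<rho> k l else 0))"
  proof (intro sum.cong refl)
    fix k l assume "k \<in> X" "l \<in> X"
    then have "k < D" "l < D" using X by auto
    then show "(\<Sum>n<D. U n k * cnj (U n l)) * (ph E hbar \<tau> k l * \<rho> k l)
        = (if k = l then ph E hbar \<tau> k l * \<rho> k l else 0)"
      by (simp add: unitary_col[OF U])
  qed
  also have "\<dots> = (\<Sum>k\<in>X. \<rho> k k)"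
    using fin by simp
  finally show ?thesis by (simp add: Re_sum)
qed

lemma mcn: "z * cnj z = complex_of_real ((cmod z)\<^sup>2)" "cnj z * z = complex_of_real ((cmod z)\<^sup>2)"
  by (simp_all only: complex_norm_square mult.commute)

lemma diag_nonneg:
  assumes "density_matrix D \<rho>" "k < D"
  shows "Re (\<rho> k k) \<ge> 0"
proof -
  have "QX {k} \<rho> (\<lambda>_. 1) \<ge> 0" using assms by (intro QX_nonneg) auto
  then show ?thesis by (simp add: QX_def)
qed

lemma diag_sum:
  assumes "density_matrix D \<rho>"
  shows "(\<Sum>k<D. Re (\<rho> k k)) = 1"
proof -
  have "(\<Sum>n<D. \<rho> n n) = 1" using assms unfolding density_matrix_def by blast
  then show ?thesis by (metis Re_sum one_complex.sel)
qed

lemma diag_real: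
  assumes "density_matrix D \<rho>" "k < D"
  shows "\<rho> k k = complex_of_real (Re (\<rho> k k))"
proof -
  have h: "\<rho> k k = cnj (\<rho> k k)" using assms unfolding density_matrix_def by blast
  have "Im (\<rho> k k) = 0" using arg_cong[OF h, of Im] by simp
  then show ?thesis by (simp add: complex_eq_iff)
qed

lemma offdiag_bound:
  assumes rho: "density_matrix D \<rho>" and kl: "k < D" "l < D"
  shows "(cmod (\<rho> k l))\<^sup>2 \<le> Re (\<rho> k k) * Re (\<rho> l l)"
proof (cases "k = l")
  case True
  have "cmod (\<rho> k k) = cmod (complex_of_real (Re (\<rho> k k)))"
    using diag_real[OF rho kl(1)] by (rule arg_cong)
  also have "\<dots> = \<bar>Re (\<rho> k k)\<bar>" by (rule norm_of_real)
  finally have "cmod (\<rho> k k) = \<bar>Re (\<rho> k k)\<bar>" .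
  then show ?thesis using True by (simp add: power2_eq_square)
next
  case False
  define c where "c = (cmod (\<rho> k l))\<^sup>2"
  define pk where "pk = Re (\<rho> k k)"
  define pl where "pl = Re (\<rho> l l)"
  have herm: "\<rho> l k = cnj (\<rho> k l)" using rho kl unfolding density_matrix_def by blast
  have key: "pk - 2 * t * c + t\<^sup>2 * c * pl \<ge> 0" for t :: real
  proof -
    define lam where "lam = - complex_of_real t * cnj (\<rho> k l)"
    define v where "v = (\<lambda>j. if j = k then 1 else if j = l then lam else (0::complex))"
    have sub: "{k, l} \<subseteq> {..<D}" using kl by auto
    have q0: "QX {k, l} \<rho> v \<ge> 0" by (rule QX_nonneg[OF rho sub])
    have q1: "QX {k, l} \<rho> v = Re (\<rho> k k + \<rho> k l * lam + cnj lam * \<rho> l k + cnj lam * \<rho> l l * lam)"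
      unfolding QX_def v_def using False by (simp add: algebra_simps)
    have a1: "\<rho> k l * lam = - complex_of_real (t * c)"
      unfolding lam_def c_def by (simp add: mcn mult_ac)
    have a2: "cnj lam * \<rho> l k = - complex_of_real (t * c)"
      unfolding lam_def c_def herm by (simp add: mcn mult_ac)
    have a3: "cnj lam * \<rho> l l * lam = complex_of_real (t\<^sup>2 * c) * \<rho> l l"
      unfolding lam_def c_def by (simp add: mcn mult_ac power2_eq_square)
    have "Re (\<rho> k k + \<rho> k l * lam + cnj lam * \<rho> l k + cnj lam * \<rho> l l * lam)
        = pk - 2 * t * c + t\<^sup>2 * c * pl"
      unfolding a1 a2 a3 pk_def pl_def by simp
    then show ?thesis using q0 q1 by linarith
  qed
  have c0: "c \<ge> 0" unfolding c_def by simp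
  have pl0: "pl \<ge> 0" unfolding pl_def by (rule diag_nonneg[OF rho kl(2)])
  show ?thesis
  proof (cases "pl > 0")
    case True
    have "pk - 2 * (1/pl) * c + (1/pl)\<^sup>2 * c * pl \<ge> 0" by (rule key)
    then have "pk - c / pl \<ge> 0" using True by (simp add: power2_eq_square field_simps)
    then show ?thesis using True unfolding c_def[symmetric] pk_def[symmetric] pl_def[symmetric]
      by (simp add: field_simps mult.commute)
  next
    case False
    then have "pl = 0" using pl0 by simp
    show ?thesis
    proof (rule ccontr)
      assume "\<not> ?thesis"
      then have cp: "c > 0" using c0 \<open>pl = 0\<close> unfolding c_def pl_def by auto
      have "pk - 2 * ((pk + 1) / (2 * c)) * c + ((pk + 1) / (2 * c))\<^sup>2 * c * pl \<ge> 0" by (rule key)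
      then show False using cp \<open>pl = 0\<close> by (simp add: field_simps)
    qed
  qed
qed

lemma row_norm:
  assumes U: "unitary_matrix D U" and n: "n < D"
  shows "(\<Sum>k<D. (cmod (U n k))\<^sup>2) \<le> 1"
proof -
  define r where "r = (\<Sum>k<D. (cmod (U n k))\<^sup>2)"
  define P where "P = (\<lambda>m. \<Sum>k<D. U m k * cnj (U n k))"
  have r0: "r \<ge> 0" unfolding r_def by (simp add: sum_nonneg)
  have Pn: "P n = complex_of_real r"
    unfolding P_def r_def by (simp add: mcn)
  have "complex_of_real (\<Sum>m<D. (cmod (P m))\<^sup>2) = (\<Sum>m<D. P m * cnj (P m))"
    by (simp add: mcn)
  also have "\<dots> = (\<Sum>m<D. \<Sum>j<D. \<Sum>k<D. (U m k * cnj (U m j)) * (cnj (U n k) * U n j))"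
    unfolding P_def by (simp add: sum_distrib_left sum_distrib_right cnj_sum mult_ac)
  also have "\<dots> = (\<Sum>j<D. \<Sum>k<D. \<Sum>m<D. (U m k * cnj (U m j)) * (cnj (U n k) * U n j))"
  proof -
    have "(\<Sum>m<D. \<Sum>j<D. \<Sum>k<D. (U m k * cnj (U m j)) * (cnj (U n k) * U n j))
       = (\<Sum>j<D. \<Sum>m<D. \<Sum>k<D. (U m k * cnj (U m j)) * (cnj (U n k) * U n j))" by (rule sum.swap)
    also have "\<dots> = (\<Sum>j<D. \<Sum>k<D. \<Sum>m<D. (U m k * cnj (U m j)) * (cnj (U n k) * U n j))"
      by (rule sum.cong[OF refl], rule sum.swap)
    finally show ?thesis .
  qed
  also have "\<dots> = (\<Sum>j<D. \<Sum>k<D. (\<Sum>m<D. U m k * cnj (U m j)) * (cnj (U n k) * U n j))"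
    by (simp add: sum_distrib_right)
  also have "\<dots> = (\<Sum>j<D. \<Sum>k<D. if k = j then cnj (U n k) * U n j else 0)"
    by (intro sum.cong refl) (simp add: unitary_col[OF U])
  also have "\<dots> = (\<Sum>k<D. cnj (U n k) * U n k)" by simp
  also have "\<dots> = complex_of_real r" unfolding r_def by (simp add: mcn)
  finally have S: "(\<Sum>m<D. (cmod (P m))\<^sup>2) = r" using of_real_eq_iff by blast
  have "(cmod (P n))\<^sup>2 \<le> (\<Sum>m<D. (cmod (P m))\<^sup>2)"
    using n by (intro member_le_sum) auto
  then have "r\<^sup>2 \<le> r" using S Pn r0 by simp
  then have "r * r \<le> r * 1" by (simp add: power2_eq_square)
  then show ?thesis using r0 unfolding r_def[symmetric] by (cases "r = 0") (auto simp: mult_le_cancel_left)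
qed

definition amp :: "(nat \<Rightarrow> nat \<Rightarrow> complex) \<Rightarrow> (nat \<Rightarrow> nat \<Rightarrow> complex) \<Rightarrow> nat \<Rightarrow> nat \<Rightarrow> nat \<Rightarrow> complex" where
  "amp U \<rho> n k l = U n k * cnj (U n l) * \<rho> k l"

definition zz where
  "zz B U \<rho> E hbar \<tau> n = (\<Sum>k\<in>B. \<Sum>l\<in>B. amp U \<rho> n k l * ph E hbar \<tau> k l)"

definition FF where
  "FF D B U \<rho> E hbar \<tau> = (\<Sum>n<D. (cmod (zz B U \<rho> E hbar \<tau> n))\<^sup>2)"

definition WW :: "(nat \<Rightarrow> real) \<Rightarrow> real \<Rightarrow> nat \<Rightarrow> nat \<Rightarrow> nat \<Rightarrow> nat \<Rightarrow> real" where
  "WW E hbar k l k' l' = ((E k - E l) - (E k' - E l')) / hbar"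

lemma QX_zz: "QX B \<rho> (vv U E hbar \<tau> n) = Re (zz B U \<rho> E hbar \<tau> n)"
  unfolding QX_def zz_def vv_prod amp_def by (simp add: mult_ac)

lemma ph_cnj: "ph E hbar \<tau> k l * cnj (ph E hbar \<tau> k' l') = exp (- \<i> * complex_of_real (WW E hbar k l k' l' * \<tau>))"
proof -
  have "ph E hbar \<tau> k l * cnj (ph E hbar \<tau> k' l')
     = exp (- \<i> * complex_of_real ((E k - E l) * \<tau> / hbar) + \<i> * complex_of_real ((E k' - E l') * \<tau> / hbar))"
  proof -
    have c2: "cnj (exp (- \<i> * complex_of_real x)) = exp (\<i> * complex_of_real x)" for x
      by (simp add: exp_cnj)
    show ?thesis by (simp only: ph_def c2 exp_add[symmetric])
  qed
  also have "- \<i> * complex_of_real ((E k - E l) * \<tau> / hbar) + \<i> * complex_of_real ((E k' - E l') * \<tau> / hbar)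
      = - \<i> * complex_of_real (WW E hbar k l k' l' * \<tau>)"
  proof -
    have r: "(E k - E l) * \<tau> / hbar - (E k' - E l') * \<tau> / hbar = WW E hbar k l k' l' * \<tau>"
      unfolding WW_def by (simp add: diff_divide_distrib left_diff_distrib)
    have "- \<i> * complex_of_real ((E k - E l) * \<tau> / hbar) + \<i> * complex_of_real ((E k' - E l') * \<tau> / hbar)
       = - \<i> * complex_of_real ((E k - E l) * \<tau> / hbar - (E k' - E l') * \<tau> / hbar)"
    proof -
      have g: "- \<i> * complex_of_real a + \<i> * complex_of_real b = - \<i> * complex_of_real (a - b)" for a b :: real
        by (simp add: algebra_simps)
      show ?thesis by (rule g)
    qed
    then show ?thesis unfolding r .
  qed
  finally show ?thesis .
qed

lemma Re_exp_mult: "Re (c * exp (- \<i> * complex_of_real x)) = Re c * cos x + Im c * sin x"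
proof -
  have "exp (- \<i> * complex_of_real x) = Complex (cos x) (- sin x)"
    by (simp add: complex_eq_iff exp_Euler cos_of_real sin_of_real Re_exp Im_exp)
  then show ?thesis by simp
qed

lemma FF_trig:
  "FF D B U \<rho> E hbar \<tau> = (\<Sum>n<D. \<Sum>k'\<in>B. \<Sum>k\<in>B. \<Sum>l'\<in>B. \<Sum>l\<in>B.
      Re (amp U \<rho> n k l * cnj (amp U \<rho> n k' l')) * cos (WW E hbar k l k' l' * \<tau>)
    + Im (amp U \<rho> n k l * cnj (amp U \<rho> n k' l')) * sin (WW E hbar k l k' l' * \<tau>))"
proof -
  have pn: "(cmod (zz B U \<rho> E hbar \<tau> n))\<^sup>2 = Re (\<Sum>k'\<in>B. \<Sum>k\<in>B. \<Sum>l'\<in>B. \<Sum>l\<in>B. (amp U \<rho> n k l * cnj (amp U \<rho> n k' l')) * (ph E hbar \<tau> k l * cnj (ph E hbar \<tau> k' l')))" for n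
  proof -
    have "(cmod (zz B U \<rho> E hbar \<tau> n))\<^sup>2 = Re (zz B U \<rho> E hbar \<tau> n * cnj (zz B U \<rho> E hbar \<tau> n))"
      by (simp add: mcn)
    also have "zz B U \<rho> E hbar \<tau> n * cnj (zz B U \<rho> E hbar \<tau> n)
      = (\<Sum>k'\<in>B. \<Sum>k\<in>B. \<Sum>l'\<in>B. \<Sum>l\<in>B. (amp U \<rho> n k l * cnj (amp U \<rho> n k' l')) * (ph E hbar \<tau> k l * cnj (ph E hbar \<tau> k' l')))"
      unfolding zz_def by (simp add: sum_distrib_left sum_distrib_right cnj_sum mult_ac)
    finally show ?thesis .
  qed
  show ?thesis unfolding FF_def pn ph_cnj Re_sum Re_exp_mult ..
qed

lemma FF_avg:
  assumes "finite B"
  shows "((\<lambda>T. avg (FF D B U \<rho> E hbar) T) \<longlongrightarrow>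
     (\<Sum>n<D. \<Sum>k'\<in>B. \<Sum>k\<in>B. \<Sum>l'\<in>B. \<Sum>l\<in>B.
        (if WW E hbar k l k' l' = 0 then Re (amp U \<rho> n k l * cnj (amp U \<rho> n k' l')) else 0))) at_top"
proof -
  have e: "FF D B U \<rho> E hbar = (\<lambda>\<tau>. \<Sum>n<D. \<Sum>k'\<in>B. \<Sum>k\<in>B. \<Sum>l'\<in>B. \<Sum>l\<in>B.
      Re (amp U \<rho> n k l * cnj (amp U \<rho> n k' l')) * cos (WW E hbar k l k' l' * \<tau>)
    + Im (amp U \<rho> n k l * cnj (amp U \<rho> n k' l')) * sin (WW E hbar k l k' l' * \<tau>))"
    by (rule ext) (rule FF_trig)
  show ?thesis unfolding e
    using assms
    by (intro avg_sum ballI finite_lessThan continuous_intros avg_trig) auto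
qed

lemma sum4_split:
  fixes f :: "nat \<Rightarrow> nat \<Rightarrow> nat \<Rightarrow> nat \<Rightarrow> real"
  assumes "finite B"
  shows "(\<Sum>k'\<in>B. \<Sum>k\<in>B. \<Sum>l'\<in>B. \<Sum>l\<in>B. (if k = l \<and> k' = l' then f k l k' l' else 0))
       = (\<Sum>k'\<in>B. \<Sum>k\<in>B. f k k k' k')"
    and "(\<Sum>k'\<in>B. \<Sum>k\<in>B. \<Sum>l'\<in>B. \<Sum>l\<in>B. (if k = k' \<and> l = l' \<and> k \<noteq> l then f k l k' l' else 0))
       = (\<Sum>k'\<in>B. \<Sum>l'\<in>B. (if k' \<noteq> l' then f k' l' k' l' else 0))"
proof -
  have a: "(\<Sum>l\<in>B. (if k = l \<and> k' = l' then f k l k' l' else 0)) = (if k' = l' then f k k k' l' else 0)"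
    if "k \<in> B" for k k' l'
    using assms that by (cases "k' = l'") (simp_all add: sum.delta)
  show "(\<Sum>k'\<in>B. \<Sum>k\<in>B. \<Sum>l'\<in>B. \<Sum>l\<in>B. (if k = l \<and> k' = l' then f k l k' l' else 0))
       = (\<Sum>k'\<in>B. \<Sum>k\<in>B. f k k k' k')"
    using assms by (simp add: a sum.delta)
  have b: "(\<Sum>k\<in>B. \<Sum>l'\<in>B. \<Sum>l\<in>B. (if k = k' \<and> l = l' \<and> k \<noteq> l then f k l k' l' else 0))
     = (\<Sum>l'\<in>B. (if k' \<noteq> l' then f k' l' k' l' else 0))" if "k' \<in> B" for k'
  proof -
    have "(\<Sum>k\<in>B. \<Sum>l'\<in>B. \<Sum>l\<in>B. (if k = k' \<and> l = l' \<and> k \<noteq> l then f k l k' l' else 0))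
       = (\<Sum>k\<in>B. if k = k' then (\<Sum>l'\<in>B. \<Sum>l\<in>B. (if l = l' \<and> k \<noteq> l then f k l k' l' else 0)) else 0)"
      by (intro sum.cong refl) auto
    also have "\<dots> = (\<Sum>l'\<in>B. \<Sum>l\<in>B. (if l = l' \<and> k' \<noteq> l then f k' l k' l' else 0))"
      using assms that by (simp add: sum.delta')
    also have "\<dots> = (\<Sum>l'\<in>B. (if k' \<noteq> l' then f k' l' k' l' else 0))"
    proof (intro sum.cong refl)
      fix l' assume "l' \<in> B"
      then show "(\<Sum>l\<in>B. (if l = l' \<and> k' \<noteq> l then f k' l k' l' else 0)) = (if k' \<noteq> l' then f k' l' k' l' else 0)"
      proof (cases "k' = l'")
        case True then show ?thesis by (auto intro!: sum.neutral)
      next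
        case False
        have "(\<Sum>l\<in>B. (if l = l' \<and> k' \<noteq> l then f k' l k' l' else 0)) = (\<Sum>l\<in>B. (if l = l' then f k' l k' l' else 0))"
          using False by (intro sum.cong refl) auto
        then show ?thesis using False assms \<open>l' \<in> B\<close> by (simp add: sum.delta')
      qed
    qed
    finally show ?thesis .
  qed
  show "(\<Sum>k'\<in>B. \<Sum>k\<in>B. \<Sum>l'\<in>B. \<Sum>l\<in>B. (if k = k' \<and> l = l' \<and> k \<noteq> l then f k l k' l' else 0))
       = (\<Sum>k'\<in>B. \<Sum>l'\<in>B. (if k' \<noteq> l' then f k' l' k' l' else 0))"
    by (intro sum.cong refl b)
qed

lemma WW_zero_iff:
  assumes hbar: "hbar > 0" and B: "B \<subseteq> {..<D}"
    and ns: "nondegenerate_spectrum D E" and ng: "nondegenerate_gaps D E"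
    and idx: "k \<in> B" "l \<in> B" "k' \<in> B" "l' \<in> B"
  shows "WW E hbar k l k' l' = 0 \<longleftrightarrow> (k = l \<and> k' = l') \<or> (k = k' \<and> l = l' \<and> k \<noteq> l)"
proof -
  have lt: "k < D" "l < D" "k' < D" "l' < D" using idx B by auto
  have inj: "inj_on E {..<D}" using ns unfolding nondegenerate_spectrum_def .
  have "WW E hbar k l k' l' = 0 \<longleftrightarrow> E k - E l = E k' - E l'"
    using hbar unfolding WW_def by auto
  also have "\<dots> \<longleftrightarrow> (k = l \<and> k' = l') \<or> (k = k' \<and> l = l' \<and> k \<noteq> l)"
  proof
    assume eq: "E k - E l = E k' - E l'"
    show "(k = l \<and> k' = l') \<or> (k = k' \<and> l = l' \<and> k \<noteq> l)"
    proof (cases "E k - E l = 0")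
      case True
      then have "E k = E l" "E k' = E l'" using eq by auto
      then have "k = l" "k' = l'" using inj lt by (auto dest: inj_onD)
      then show ?thesis by simp
    next
      case False
      then have "k = k' \<and> l = l'" using ng eq lt unfolding nondegenerate_gaps_def by blast
      moreover have "k \<noteq> l" using False by auto
      ultimately show ?thesis by simp
    qed
  next
    assume "(k = l \<and> k' = l') \<or> (k = k' \<and> l = l' \<and> k \<noteq> l)"
    then show "E k - E l = E k' - E l'" by auto
  qed
  finally show ?thesis .
qed

lemma limit_bound:
  assumes rho: "density_matrix D \<rho>" and U: "unitary_matrix D U" and B: "B \<subseteq> {..<D}"
    and hbar: "hbar > 0" and ns: "nondegenerate_spectrum D E" and ng: "nondegenerate_gaps D E"
    and mB: "\<And>k. k \<in> B \<Longrightarrow> Re (\<rho> k k) \<le> m" and m0: "m \<ge> 0"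
  shows "(\<Sum>n<D. \<Sum>k'\<in>B. \<Sum>k\<in>B. \<Sum>l'\<in>B. \<Sum>l\<in>B.
        (if WW E hbar k l k' l' = 0 then Re (amp U \<rho> n k l * cnj (amp U \<rho> n k' l')) else 0)) \<le> 2 * m"
proof -
  have fin: "finite B" using B finite_subset by blast
  define f where "f n k l k' l' = Re (amp U \<rho> n k l * cnj (amp U \<rho> n k' l'))" for n k l k' l'
  define u where "u n k = (cmod (U n k))\<^sup>2" for n k
  define p where "p k = Re (\<rho> k k)" for k
  define w where "w n = (\<Sum>k\<in>B. u n k * p k)" for n
  have p0: "p k \<ge> 0" if "k \<in> B" for k using diag_nonneg[OF rho] that B unfolding p_def by auto
  have u0: "u n k \<ge> 0" for n k unfolding u_def by simp
  have split: "(\<Sum>k'\<in>B. \<Sum>k\<in>B. \<Sum>l'\<in>B. \<Sum>l\<in>B. (if WW E hbar k l k' l' = 0 then f n k l k' l' else 0))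
     = (\<Sum>k'\<in>B. \<Sum>k\<in>B. \<Sum>l'\<in>B. \<Sum>l\<in>B. (if k = l \<and> k' = l' then f n k l k' l' else 0))
     + (\<Sum>k'\<in>B. \<Sum>k\<in>B. \<Sum>l'\<in>B. \<Sum>l\<in>B. (if k = k' \<and> l = l' \<and> k \<noteq> l then f n k l k' l' else 0))" for n
    unfolding sum.distrib[symmetric]
    by (intro sum.cong refl) (auto simp: WW_zero_iff[OF hbar B ns ng])
  have S1: "(\<Sum>k'\<in>B. \<Sum>k\<in>B. f n k k k' k') \<le> (w n)\<^sup>2" if n: "n < D" for n
  proof -
    have "(\<Sum>k'\<in>B. \<Sum>k\<in>B. f n k k k' k') = Re ((\<Sum>k\<in>B. amp U \<rho> n k k) * cnj (\<Sum>k'\<in>B. amp U \<rho> n k' k'))"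
    proof -
      have "Re ((\<Sum>k\<in>B. amp U \<rho> n k k) * cnj (\<Sum>k'\<in>B. amp U \<rho> n k' k'))
          = (\<Sum>k\<in>B. \<Sum>k'\<in>B. f n k k k' k')"
        unfolding f_def by (simp add: sum_product cnj_sum Re_sum)
      also have "\<dots> = (\<Sum>k'\<in>B. \<Sum>k\<in>B. f n k k k' k')" by (rule sum.swap)
      finally show ?thesis by simp
    qed
    also have "\<dots> = (cmod (\<Sum>k\<in>B. amp U \<rho> n k k))\<^sup>2" by (simp only: mcn Re_complex_of_real)
    also have "\<dots> \<le> (\<Sum>k\<in>B. cmod (amp U \<rho> n k k))\<^sup>2"
      by (intro power_mono norm_sum) simp
    also have "\<dots> \<le> (w n)\<^sup>2"
    proof (intro power_mono)
      show "(\<Sum>k\<in>B. cmod (amp U \<rho> n k k)) \<le> w n"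
        unfolding w_def
      proof (intro sum_mono)
        fix k assume k: "k \<in> B"
        have "(cmod (\<rho> k k))\<^sup>2 \<le> (p k)\<^sup>2"
          using offdiag_bound[OF rho, of k k] k B unfolding p_def by (auto simp: power2_eq_square)
        then have "cmod (\<rho> k k) \<le> p k" using p0[OF k] by (rule power2_le_imp_le)
        then show "cmod (amp U \<rho> n k k) \<le> u n k * p k"
          unfolding amp_def u_def by (simp add: norm_mult power2_eq_square mult_left_mono)
      qed
    qed (simp add: sum_nonneg)
    finally show ?thesis .
  qed
  have S2: "(\<Sum>k'\<in>B. \<Sum>l'\<in>B. (if k' \<noteq> l' then f n k' l' k' l' else 0)) \<le> (w n)\<^sup>2" if n: "n < D" for n
  proof -
    have "(\<Sum>k'\<in>B. \<Sum>l'\<in>B. (if k' \<noteq> l' then f n k' l' k' l' else 0))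
        \<le> (\<Sum>k'\<in>B. \<Sum>l'\<in>B. (u n k' * p k') * (u n l' * p l'))"
    proof (intro sum_mono)
      fix k l assume kl: "k \<in> B" "l \<in> B"
      have fe: "f n k l k l = (cmod (amp U \<rho> n k l))\<^sup>2" unfolding f_def by (simp add: mcn)
      have "(cmod (amp U \<rho> n k l))\<^sup>2 = u n k * u n l * (cmod (\<rho> k l))\<^sup>2"
        unfolding amp_def u_def by (simp add: norm_mult power_mult_distrib)
      also have "\<dots> \<le> u n k * u n l * (p k * p l)"
        using offdiag_bound[OF rho, of k l] kl B u0 unfolding p_def by (auto intro!: mult_left_mono)
      finally have "f n k l k l \<le> (u n k * p k) * (u n l * p l)" using fe by (simp add: mult_ac)
      moreover have "0 \<le> (u n k * p k) * (u n l * p l)" using u0 p0 kl by simp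
      ultimately show "(if k \<noteq> l then f n k l k l else 0) \<le> (u n k * p k) * (u n l * p l)" by simp
    qed
    also have "\<dots> = (w n)\<^sup>2" unfolding w_def by (simp add: power2_eq_square sum_product)
    finally show ?thesis .
  qed
  have wle: "w n \<le> m" and w0: "w n \<ge> 0" if n: "n < D" for n
  proof -
    have "w n \<le> (\<Sum>k\<in>B. u n k * m)" unfolding w_def using mB u0 unfolding p_def by (intro sum_mono mult_left_mono) auto
    also have "\<dots> = m * (\<Sum>k\<in>B. u n k)" by (simp add: sum_distrib_left mult.commute)
    also have "\<dots> \<le> m * 1"
    proof -
      have "(\<Sum>k\<in>B. u n k) \<le> (\<Sum>k<D. u n k)" using B u0 by (intro sum_mono2) auto
      also have "\<dots> \<le> 1" using row_norm[OF U n] unfolding u_def .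
      finally show ?thesis using m0 by (intro mult_left_mono) auto
    qed
    finally show "w n \<le> m" by simp
    show "w n \<ge> 0" unfolding w_def using u0 p0 by (intro sum_nonneg) auto
  qed
  have colsum: "(\<Sum>n<D. u n k) = 1" if "k \<in> B" for k
  proof -
    have "k < D" using that B by auto
    then have "(\<Sum>n<D. U n k * cnj (U n k)) = 1" using unitary_col[OF U] by simp
    then have "complex_of_real (\<Sum>n<D. u n k) = 1" unfolding u_def by (simp add: mcn)
    then show ?thesis using of_real_eq_1_iff by blast
  qed
  have wsum: "(\<Sum>n<D. w n) \<le> 1"
  proof -
    have "(\<Sum>n<D. w n) = (\<Sum>k\<in>B. p k * (\<Sum>n<D. u n k))"
    proof -
      have "(\<Sum>n<D. w n) = (\<Sum>n<D. \<Sum>k\<in>B. u n k * p k)" unfolding w_def ..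
      also have "\<dots> = (\<Sum>k\<in>B. \<Sum>n<D. u n k * p k)" by (rule sum.swap)
      also have "\<dots> = (\<Sum>k\<in>B. p k * (\<Sum>n<D. u n k))" by (simp add: sum_distrib_left mult.commute)
      finally show ?thesis .
    qed
    also have "\<dots> = (\<Sum>k\<in>B. p k)" using colsum by simp
    also have "\<dots> \<le> (\<Sum>k<D. p k)" using B p0 diag_nonneg[OF rho] unfolding p_def by (intro sum_mono2) auto
    also have "\<dots> = 1" using diag_sum[OF rho] unfolding p_def .
    finally show ?thesis .
  qed
  have "(\<Sum>n<D. \<Sum>k'\<in>B. \<Sum>k\<in>B. \<Sum>l'\<in>B. \<Sum>l\<in>B. (if WW E hbar k l k' l' = 0 then f n k l k' l' else 0))
      = (\<Sum>n<D. (\<Sum>k'\<in>B. \<Sum>k\<in>B. f n k k k' k') + (\<Sum>k'\<in>B. \<Sum>l'\<in>B. (if k' \<noteq> l' then f n k' l' k' l' else 0)))"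
    unfolding split sum4_split[OF fin] ..
  also have "\<dots> \<le> (\<Sum>n<D. 2 * (m * w n))"
  proof (intro sum_mono)
    fix n assume "n \<in> {..<D}"
    then have n: "n < D" by simp
    have "(w n)\<^sup>2 \<le> m * w n" using wle[OF n] w0[OF n] by (simp add: power2_eq_square mult_right_mono)
    then show "(\<Sum>k'\<in>B. \<Sum>k\<in>B. f n k k k' k') + (\<Sum>k'\<in>B. \<Sum>l'\<in>B. (if k' \<noteq> l' then f n k' l' k' l' else 0)) \<le> 2 * (m * w n)"
      using S1[OF n] S2[OF n] by linarith
  qed
  also have "\<dots> = 2 * m * (\<Sum>n<D. w n)" by (simp add: sum_distrib_left mult_ac)
  also have "\<dots> \<le> 2 * m" using wsum m0 by (simp add: mult_left_le)
  finally show ?thesis unfolding f_def .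
qed

definition cnt :: "nat \<Rightarrow> real \<Rightarrow> real \<Rightarrow> real" where
  "cnt J h L = (\<Sum>j=1..J. if real j * h \<le> L then h else 0)"

lemma cnt_Suc: "cnt (Suc J) h L = cnt J h L + (if real (Suc J) * h \<le> L then h else 0)"
  unfolding cnt_def by simp

lemma cnt_upper: assumes "h > 0" "L \<ge> 0" shows "cnt J h L \<le> L \<and> cnt J h L \<le> real J * h"
proof (induction J)
  case 0 then show ?case using assms by (simp add: cnt_def)
next
  case (Suc J)
  then show ?case unfolding cnt_Suc using assms by (auto simp: algebra_simps)
qed

lemma cnt_lower: assumes "h > 0" shows "cnt J h L \<ge> min (L - h) (real J * h)"
proof (induction J)
  case 0 then show ?case using assms by (simp add: cnt_def)
next
  case (Suc J)
  show ?case
  proof (cases "real (Suc J) * h \<le> L")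
    case True
    then show ?thesis using Suc unfolding cnt_Suc by (auto simp: algebra_simps)
  next
    case False
    then show ?thesis using Suc unfolding cnt_Suc by (auto simp: algebra_simps min_def split: if_splits)
  qed
qed

lemma ind_sum_eq:
  assumes "x > 0" "h > 0"
  shows "h * (\<Sum>j=1..J. if x \<le> exp (- (real j * h)) then x else 0) = x * cnt J h (- ln x)"
proof -
  have "x \<le> exp (- (real j * h)) \<longleftrightarrow> real j * h \<le> - ln x" for j
  proof -
    have "ln x \<le> ln (exp (- (real j * h))) \<longleftrightarrow> x \<le> exp (- (real j * h))"
      using assms by (intro ln_le_cancel_iff) auto
    then show ?thesis by auto
  qed
  then show ?thesis unfolding cnt_def
    by (simp add: sum_distrib_left if_distrib mult.commute cong: if_cong)
qed

lemma xlnx_lower: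
  assumes "0 \<le> x" "x \<le> 1" "h > 0"
  shows "- (x * ln x) \<ge> h * (\<Sum>j=1..J. if x \<le> exp (- (real j * h)) then x else 0)"
proof (cases "x = 0")
  case True then show ?thesis by simp
next
  case False
  then have x: "x > 0" using assms by simp
  have L: "- ln x \<ge> 0" using assms x by simp
  have "x * cnt J h (- ln x) \<le> x * (- ln x)"
    using cnt_upper[OF assms(3) L] x by (intro mult_left_mono) auto
  then show ?thesis using ind_sum_eq[OF x assms(3)] by simp
qed

lemma xlnx_upper:
  assumes "0 \<le> x" "x \<le> 1" "h > 0"
  shows "- (x * ln x) \<le> x * h + h * (\<Sum>j=1..J. if x \<le> exp (- (real j * h)) then x else 0)
           + 2 * exp (- (real J * h) / 2)"
proof (cases "x = 0")
  case True then show ?thesis by (simp add: sum_nonneg)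
next
  case False
  then have x: "x > 0" using assms by simp
  define L where "L = - ln x"
  have L0: "L \<ge> 0" using assms x unfolding L_def by simp
  have S0: "0 \<le> h * (\<Sum>j=1..J. if x \<le> exp (- (real j * h)) then x else 0)"
    using assms by (intro mult_nonneg_nonneg sum_nonneg) auto
  have e0: "exp (- (real J * h) / 2) > 0" by simp
  show ?thesis
  proof (cases "L \<le> real J * h")
    case True
    have "min (L - h) (real J * h) = L - h" using True assms by simp
    then have LL: "L \<le> h + cnt J h L" using cnt_lower[OF assms(3), of L J] by simp
    have "x * L \<le> x * h + x * cnt J h L" using mult_left_mono[OF LL, of x] x by (simp add: distrib_left)
    then have "- (x * ln x) \<le> x * h + h * (\<Sum>j=1..J. if x \<le> exp (- (real j * h)) then x else 0)"
      using ind_sum_eq[OF x assms(3), of J] unfolding L_def by simp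
    then show ?thesis using e0 by linarith
  next
    case False
    have sx: "sqrt x > 0" using x by simp
    have "ln (1 / sqrt x) < 1 / sqrt x" using sx by (intro ln_less_self) simp
    moreover have "ln (1 / sqrt x) = L / 2"
      unfolding L_def using x by (simp add: ln_div ln_sqrt)
    ultimately have "L < 2 / sqrt x" by simp
    then have "x * L \<le> x * (2 / sqrt x)" using x by (intro mult_left_mono) auto
    also have "x * (2 / sqrt x) = 2 * sqrt x"
    proof -
      have xe: "x = sqrt x * sqrt x" using x by simp
      have "sqrt x * sqrt x * (2 / sqrt x) = 2 * sqrt x" using sx by (simp add: field_simps)
      then show ?thesis using xe by simp
    qed
    also have "sqrt x \<le> exp (- (real J * h) / 2)"
    proof -
      have "ln x < - (real J * h)" using False unfolding L_def by simp
      then have "exp (ln x) < exp (- (real J * h))" by simp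
      then have "x \<le> exp (- (real J * h))" using exp_ln[OF x] by simp
      then have "sqrt x \<le> sqrt (exp (- (real J * h)))" by simp
      also have "sqrt (exp (- (real J * h))) = exp (- (real J * h) / 2)"
      proof -
        have "exp (- (real J * h)) = (exp (- (real J * h) / 2))\<^sup>2"
          by (simp add: power2_eq_square exp_add[symmetric])
        then show ?thesis by simp
      qed
      finally show ?thesis .
    qed
    finally have "- (x * ln x) \<le> 2 * exp (- (real J * h) / 2)" unfolding L_def by simp
    moreover have "x * h \<ge> 0" using x assms by simp
    ultimately show ?thesis using S0 by linarith
  qed
qed

lemma telescope_shift:
  fixes f :: "nat \<Rightarrow> real"
  shows "(\<Sum>j=1..J. f (Suc j)) = (\<Sum>j=1..J. f j) - f 1 + f (Suc J)"
  by (induction J) simp_all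

lemma entropy_levels:
  fixes p q :: "nat \<Rightarrow> real" and D J :: nat and h \<eta> :: real
  assumes p0: "\<And>k. k < D \<Longrightarrow> p k \<ge> 0" and ps: "(\<Sum>k<D. p k) = 1"
    and q0: "\<And>k. k < D \<Longrightarrow> q k \<ge> 0" and qs: "(\<Sum>k<D. q k) = 1"
    and h: "h > 0"
    and lev: "\<And>j. j \<in> {1..J} \<Longrightarrow>
       (\<Sum>n<D. if q n > exp (- (real j * h)) then q n else 0)
       \<le> (\<Sum>k<D. if p k > exp (- (real (Suc j) * h)) then p k else 0) + \<eta>"
  shows "diag_entropy D q \<ge> diag_entropy D p - 2 * h - h * real J * \<eta> - 2 * real D * exp (- (real J * h) / 2)"
proof -
  define e where "e j = exp (- (real j * h))" for j :: nat
  define Pl where "Pl j = (\<Sum>k<D. if p k \<le> e j then p k else 0)" for j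
  define Pg where "Pg j = (\<Sum>k<D. if p k > e j then p k else 0)" for j
  define Ql where "Ql j = (\<Sum>k<D. if q k \<le> e j then q k else 0)" for j
  define Qg where "Qg j = (\<Sum>k<D. if q k > e j then q k else 0)" for j
  have PP: "Pl j + Pg j = 1" for j
    unfolding Pl_def Pg_def ps[symmetric] sum.distrib[symmetric] by (intro sum.cong) auto
  have QQ: "Ql j + Qg j = 1" for j
    unfolding Ql_def Qg_def qs[symmetric] sum.distrib[symmetric] by (intro sum.cong) auto
  have Pl0: "Pl j \<ge> 0" for j unfolding Pl_def using p0 by (intro sum_nonneg) auto
  have Pg0: "Pg j \<ge> 0" for j unfolding Pg_def using p0 by (intro sum_nonneg) auto
  have ple1: "p k \<le> 1" if "k < D" for k
  proof -
    have "p k \<le> (\<Sum>k<D. p k)" using that p0 by (intro member_le_sum) auto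
    then show ?thesis using ps by simp
  qed
  have qle1: "q k \<le> 1" if "k < D" for k
  proof -
    have "q k \<le> (\<Sum>k<D. q k)" using that q0 by (intro member_le_sum) auto
    then show ?thesis using qs by simp
  qed
  have Sq: "diag_entropy D q \<ge> h * (\<Sum>j=1..J. Ql j)"
  proof -
    have "h * (\<Sum>j=1..J. Ql j) = (\<Sum>n<D. h * (\<Sum>j=1..J. if q n \<le> e j then q n else 0))"
      unfolding Ql_def by (simp add: sum_distrib_left) (rule sum.swap)
    also have "\<dots> \<le> (\<Sum>n<D. - (q n * ln (q n)))"
      using q0 qle1 h unfolding e_def by (intro sum_mono xlnx_lower) auto
    also have "\<dots> = diag_entropy D q" unfolding diag_entropy_def by (simp add: sum_negf)
    finally show ?thesis .
  qed
  have Sp: "diag_entropy D p \<le> h + h * (\<Sum>j=1..J. Pl j) + 2 * real D * exp (- (real J * h) / 2)"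
  proof -
    have "diag_entropy D p = (\<Sum>n<D. - (p n * ln (p n)))" unfolding diag_entropy_def by (simp add: sum_negf)
    also have "\<dots> \<le> (\<Sum>n<D. p n * h + h * (\<Sum>j=1..J. if p n \<le> e j then p n else 0)
           + 2 * exp (- (real J * h) / 2))"
      using p0 ple1 h unfolding e_def by (intro sum_mono xlnx_upper) auto
    also have "\<dots> = h + h * (\<Sum>j=1..J. Pl j) + 2 * real D * exp (- (real J * h) / 2)"
    proof -
      have a: "(\<Sum>n<D. p n * h) = h" using ps by (simp add: sum_distrib_right[symmetric])
      have b: "(\<Sum>n<D. h * (\<Sum>j=1..J. if p n \<le> e j then p n else 0)) = h * (\<Sum>j=1..J. Pl j)"
        unfolding Pl_def by (simp add: sum_distrib_left) (rule sum.swap)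
      show ?thesis unfolding sum.distrib a b by simp
    qed
    finally show ?thesis .
  qed
  have "(\<Sum>j=1..J. Ql j) \<ge> (\<Sum>j=1..J. Pl (Suc j) - \<eta>)"
  proof (intro sum_mono)
    fix j assume j: "j \<in> {1..J}"
    have "Qg j \<le> Pg (Suc j) + \<eta>" using lev[OF j] unfolding Qg_def Pg_def e_def .
    then show "Pl (Suc j) - \<eta> \<le> Ql j" using QQ[of j] PP[of "Suc j"] by linarith
  qed
  also have "(\<Sum>j=1..J. Pl (Suc j) - \<eta>) = (\<Sum>j=1..J. Pl j) - Pl 1 + Pl (Suc J) - real J * \<eta>"
    using telescope_shift[of Pl J] by (simp add: sum_subtractf)
  finally have "(\<Sum>j=1..J. Ql j) \<ge> (\<Sum>j=1..J. Pl j) - 1 - real J * \<eta>"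
    using PP[of 1] Pg0[of 1] Pl0[of "Suc J"] by linarith
  then have "h * (\<Sum>j=1..J. Ql j) \<ge> h * ((\<Sum>j=1..J. Pl j) - 1 - real J * \<eta>)"
    using h by (intro mult_left_mono) auto
  then show ?thesis using Sq Sp by (simp add: algebra_simps)
qed

lemma amgm: assumes "lam > 0" shows "(x::real) \<le> x\<^sup>2 / (2 * lam) + lam / 2"
proof -
  have "0 \<le> (x - lam)\<^sup>2" by simp
  then have "2 * lam * x \<le> x\<^sup>2 + lam\<^sup>2" by (simp add: power2_eq_square algebra_simps)
  then show ?thesis using assms by (simp add: field_simps power2_eq_square)
qed

lemma q_facts:
  assumes rho: "density_matrix D \<rho>" and U: "unitary_matrix D U"
  shows "\<And>n. rho_prime_diag D hbar E U \<rho> \<tau> n \<ge> 0"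
    and "(\<Sum>n<D. rho_prime_diag D hbar E U \<rho> \<tau> n) = 1"
proof -
  show "rho_prime_diag D hbar E U \<rho> \<tau> n \<ge> 0" for n
    unfolding rpd_QF by (rule psd_QF[OF rho])
  have "(\<Sum>n<D. rho_prime_diag D hbar E U \<rho> \<tau> n) = (\<Sum>n<D. QX {..<D} \<rho> (vv U E hbar \<tau> n))"
    unfolding rpd_QF QF_def QX_def ..
  also have "\<dots> = (\<Sum>k<D. Re (\<rho> k k))" by (rule QX_total[OF U]) simp
  also have "\<dots> = 1" by (rule diag_sum[OF rho])
  finally show "(\<Sum>n<D. rho_prime_diag D hbar E U \<rho> \<tau> n) = 1" .
qed

lemma level_ineq:
  assumes rho: "density_matrix D \<rho>" and U: "unitary_matrix D U"
    and s: "s > 0" and e: "e > 0" and \<beta>: "\<beta> > 0"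
    and FFb: "FF D {k\<in>{..<D}. \<not> Re (\<rho> k k) > thr} U \<rho> E hbar \<tau> \<le> \<beta> * e"
  shows "(\<Sum>n<D. if rho_prime_diag D hbar E U \<rho> \<tau> n > e then rho_prime_diag D hbar E U \<rho> \<tau> n else 0)
     \<le> (\<Sum>k<D. if Re (\<rho> k k) > thr then Re (\<rho> k k) else 0) + (s + (1 + 1/s) * sqrt \<beta>)"
proof -
  define q where "q n = rho_prime_diag D hbar E U \<rho> \<tau> n" for n
  define A where "A = {k\<in>{..<D}. Re (\<rho> k k) > thr}"
  define B where "B = {k\<in>{..<D}. \<not> Re (\<rho> k k) > thr}"
  define G where "G = {n\<in>{..<D}. q n > e}"
  define v where "v n = vv U E hbar \<tau> n" for n
  have AD: "A \<subseteq> {..<D}" and BD: "B \<subseteq> {..<D}" and GD: "G \<subseteq> {..<D}" unfolding A_def B_def G_def by auto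
  have finG: "finite G" using GD finite_subset by blast
  have q0: "q n \<ge> 0" for n unfolding q_def by (rule q_facts(1)[OF rho U])
  have qs: "(\<Sum>n<D. q n) = 1" unfolding q_def by (rule q_facts(2)[OF rho U])
  have LHS: "(\<Sum>n<D. if q n > e then q n else 0) = (\<Sum>n\<in>G. q n)"
    unfolding G_def by (rule sum.inter_filter[symmetric]) simp
  have RHS: "(\<Sum>k<D. if Re (\<rho> k k) > thr then Re (\<rho> k k) else 0) = (\<Sum>k\<in>A. Re (\<rho> k k))"
    unfolding A_def by (rule sum.inter_filter[symmetric]) simp
  have qsplit: "q n \<le> (1 + s) * QX A \<rho> (v n) + (1 + 1/s) * QX B \<rho> (v n)" for n
  proof -
    have "q n = QF D \<rho> (\<lambda>k. (if k \<in> A then v n k else 0) + (if k \<in> B then v n k else 0))"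
    proof -
      have "\<And>k. k < D \<Longrightarrow> (if k \<in> A then v n k else 0) + (if k \<in> B then v n k else 0) = v n k"
        unfolding A_def B_def by auto
      then show ?thesis unfolding q_def rpd_QF v_def QF_def by (intro arg_cong[where f=Re] sum.cong refl) auto
    qed
    also have "\<dots> \<le> (1 + s) * QF D \<rho> (\<lambda>k. if k \<in> A then v n k else 0) + (1 + 1/s) * QF D \<rho> (\<lambda>k. if k \<in> B then v n k else 0)"
      by (rule QF_split[OF rho s])
    also have "\<dots> = (1 + s) * QX A \<rho> (v n) + (1 + 1/s) * QX B \<rho> (v n)"
      using QF_restrict[OF AD] QF_restrict[OF BD] by simp
    finally show ?thesis .
  qed
  have QA0: "QX A \<rho> (v n) \<ge> 0" for n by (rule QX_nonneg[OF rho AD])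
  have totA: "(\<Sum>n<D. QX A \<rho> (v n)) = (\<Sum>k\<in>A. Re (\<rho> k k))"
    unfolding v_def by (rule QX_total[OF U AD])
  have pA1: "(\<Sum>k\<in>A. Re (\<rho> k k)) \<le> 1"
  proof -
    have "(\<Sum>k\<in>A. Re (\<rho> k k)) \<le> (\<Sum>k<D. Re (\<rho> k k))"
      using AD diag_nonneg[OF rho] by (intro sum_mono2) auto
    then show ?thesis using diag_sum[OF rho] by simp
  qed
  have sumGA: "(\<Sum>n\<in>G. QX A \<rho> (v n)) \<le> (\<Sum>k\<in>A. Re (\<rho> k k))"
  proof -
    have "(\<Sum>n\<in>G. QX A \<rho> (v n)) \<le> (\<Sum>n<D. QX A \<rho> (v n))"
      using GD QA0 by (intro sum_mono2) auto
    then show ?thesis using totA by simp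
  qed
  have cardG: "real (card G) * e \<le> 1"
  proof -
    have "real (card G) * e = (\<Sum>n\<in>G. e)" by simp
    also have "\<dots> \<le> (\<Sum>n\<in>G. q n)" unfolding G_def by (intro sum_mono) auto
    also have "\<dots> \<le> (\<Sum>n<D. q n)" using GD q0 by (intro sum_mono2) auto
    finally show ?thesis using qs by simp
  qed
  define lam where "lam = sqrt \<beta> * e"
  have lam: "lam > 0" unfolding lam_def using \<beta> e by simp
  have sumGB: "(\<Sum>n\<in>G. QX B \<rho> (v n)) \<le> sqrt \<beta>"
  proof -
    have "(\<Sum>n\<in>G. QX B \<rho> (v n)) \<le> (\<Sum>n\<in>G. (QX B \<rho> (v n))\<^sup>2 / (2 * lam) + lam / 2)"
      by (intro sum_mono amgm lam)
    also have "\<dots> = (\<Sum>n\<in>G. (QX B \<rho> (v n))\<^sup>2) / (2 * lam) + real (card G) * lam / 2"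
      by (simp add: sum.distrib sum_divide_distrib)
    also have "(\<Sum>n\<in>G. (QX B \<rho> (v n))\<^sup>2) \<le> \<beta> * e"
    proof -
      have "(\<Sum>n\<in>G. (QX B \<rho> (v n))\<^sup>2) \<le> (\<Sum>n\<in>G. (cmod (zz B U \<rho> E hbar \<tau> n))\<^sup>2)"
      proof (intro sum_mono)
        fix n
        have "\<bar>QX B \<rho> (v n)\<bar> \<le> cmod (zz B U \<rho> E hbar \<tau> n)"
          unfolding v_def QX_zz by (rule abs_Re_le_cmod)
        then show "(QX B \<rho> (v n))\<^sup>2 \<le> (cmod (zz B U \<rho> E hbar \<tau> n))\<^sup>2"
          by (metis abs_ge_zero power2_abs power_mono)
      qed
      also have "\<dots> \<le> (\<Sum>n<D. (cmod (zz B U \<rho> E hbar \<tau> n))\<^sup>2)"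
        using GD by (intro sum_mono2) auto
      also have "\<dots> \<le> \<beta> * e" using FFb unfolding FF_def B_def .
      finally show ?thesis .
    qed
    then have "(\<Sum>n\<in>G. (QX B \<rho> (v n))\<^sup>2) / (2 * lam) \<le> \<beta> * e / (2 * lam)"
      using lam by (intro divide_right_mono) auto
    then have "(\<Sum>n\<in>G. (QX B \<rho> (v n))\<^sup>2) / (2 * lam) + real (card G) * lam / 2
        \<le> \<beta> * e / (2 * lam) + real (card G) * lam / 2" by simp
    also have "\<beta> * e / (2 * lam) = sqrt \<beta> / 2"
      unfolding lam_def using \<beta> e by (simp add: field_simps)
    also have "real (card G) * lam / 2 = sqrt \<beta> * (real (card G) * e) / 2"
      unfolding lam_def by (simp add: mult_ac)
    also have "\<dots> \<le> sqrt \<beta> * 1 / 2"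
      using cardG \<beta> by (intro divide_right_mono mult_left_mono) auto
    finally show ?thesis by simp
  qed
  have "(\<Sum>n\<in>G. q n) \<le> (\<Sum>n\<in>G. (1 + s) * QX A \<rho> (v n) + (1 + 1/s) * QX B \<rho> (v n))"
    by (intro sum_mono qsplit)
  also have "\<dots> = (1 + s) * (\<Sum>n\<in>G. QX A \<rho> (v n)) + (1 + 1/s) * (\<Sum>n\<in>G. QX B \<rho> (v n))"
    by (simp add: sum.distrib sum_distrib_left)
  also have "\<dots> \<le> (1 + s) * (\<Sum>k\<in>A. Re (\<rho> k k)) + (1 + 1/s) * sqrt \<beta>"
    using sumGA sumGB s by (intro add_mono mult_left_mono) auto
  also have "\<dots> \<le> (\<Sum>k\<in>A. Re (\<rho> k k)) + (s + (1 + 1/s) * sqrt \<beta>)"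
    using pA1 s by (simp add: algebra_simps mult_left_le)
  finally have fin: "(\<Sum>n\<in>G. q n) \<le> (\<Sum>k\<in>A. Re (\<rho> k k)) + (s + (1 + 1/s) * sqrt \<beta>)" .
  have "(\<Sum>n<D. if q n > e then q n else 0) \<le> (\<Sum>k<D. if Re (\<rho> k k) > thr then Re (\<rho> k k) else 0) + (s + (1 + 1/s) * sqrt \<beta>)"
    unfolding LHS RHS by (rule fin)
  then show ?thesis unfolding q_def .
qed

lemma FF_cont: "continuous_on UNIV (FF D B U \<rho> E hbar)"
proof -
  have e: "FF D B U \<rho> E hbar = (\<lambda>\<tau>. \<Sum>n<D. \<Sum>k'\<in>B. \<Sum>k\<in>B. \<Sum>l'\<in>B. \<Sum>l\<in>B.
      Re (amp U \<rho> n k l * cnj (amp U \<rho> n k' l')) * cos (WW E hbar k l k' l' * \<tau>)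
    + Im (amp U \<rho> n k l * cnj (amp U \<rho> n k' l')) * sin (WW E hbar k l k' l' * \<tau>))"
    by (rule ext) (rule FF_trig)
  show ?thesis unfolding e by (intro continuous_intros)
qed

lemma FF_nonneg: "FF D B U \<rho> E hbar \<tau> \<ge> 0"
  unfolding FF_def by (intro sum_nonneg) simp

lemma entropy_measurable:
  assumes hb: "hbar \<noteq> 0"
  shows "(\<lambda>\<tau>. diag_entropy D (rho_prime_diag D hbar E U \<rho> \<tau>)) \<in> borel_measurable borel"
proof -
  have c: "continuous_on UNIV (\<lambda>\<tau>. rho_prime_diag D hbar E U \<rho> \<tau> n)" for n
    unfolding rho_prime_diag_def using hb by (intro continuous_intros) auto
  have [measurable]: "(\<lambda>\<tau>. rho_prime_diag D hbar E U \<rho> \<tau> n) \<in> borel_measurable borel" for n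
    by (rule borel_measurable_continuous_onI[OF c])
  show ?thesis unfolding diag_entropy_def by measurable
qed

lemma Icc_fmeas: "{0..(T::real)} \<in> fmeasurable lborel"
  by (intro fmeasurableI) (auto simp: emeasure_lborel_Icc_eq)

lemma Icc_meas: "(T::real) \<ge> 0 \<Longrightarrow> measure lborel {0..T} = T"
  by (simp add: measure_def)

lemma fixed_N:
  fixes D J :: nat and h s \<beta> hbar :: real
  assumes rho: "density_matrix D \<rho>" and U: "unitary_matrix D U" and hbar: "hbar > 0"
    and ns: "nondegenerate_spectrum D E" and ng: "nondegenerate_gaps D E"
    and h: "h > 0" and s: "s > 0" and \<beta>: "\<beta> > 0"
    and cle: "c \<le> diag_entropy D (\<lambda>n. Re (\<rho> n n)) - 2 * h - h * real J * (s + (1 + 1/s) * sqrt \<beta>)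
         - 2 * real D * exp (- (real J * h) / 2)"
  shows "\<forall>\<^sub>F T in at_top. time_fraction (\<lambda>\<tau>. diag_entropy D (rho_prime_diag D hbar E U \<rho> \<tau>)
      \<ge> c) T \<ge> 1 - real J * (3 * exp (- h) / \<beta>)"
proof -
  define \<eta> where "\<eta> = s + (1 + 1/s) * sqrt \<beta>"
  define c0 where "c0 = diag_entropy D (\<lambda>n. Re (\<rho> n n)) - 2 * h - h * real J * \<eta> - 2 * real D * exp (- (real J * h) / 2)"
  have cc0: "c \<le> c0" using cle unfolding c0_def \<eta>_def .
  define thr where "thr j = exp (- (real (Suc j) * h))" for j :: nat
  define ee where "ee j = exp (- (real j * h))" for j :: nat
  define Bj where "Bj j = {k\<in>{..<D}. \<not> Re (\<rho> k k) > thr j}" for j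
  define F where "F j = FF D (Bj j) U \<rho> E hbar" for j
  have thr_ee: "thr j = ee j * exp (- h)" for j
    unfolding thr_def ee_def by (simp add: exp_add[symmetric] algebra_simps)
  have thr0: "thr j > 0" for j unfolding thr_def by simp
  have ee0: "ee j > 0" for j unfolding ee_def by simp
  have BjD: "Bj j \<subseteq> {..<D}" for j unfolding Bj_def by auto
  have finB: "finite (Bj j)" for j using BjD finite_subset by blast
  have lim: "\<exists>L. ((\<lambda>T. avg (F j) T) \<longlongrightarrow> L) at_top \<and> L < 3 * thr j" for j
  proof -
    have "((\<lambda>T. avg (F j) T) \<longlongrightarrow>
     (\<Sum>n<D. \<Sum>k'\<in>Bj j. \<Sum>k\<in>Bj j. \<Sum>l'\<in>Bj j. \<Sum>l\<in>Bj j.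
        (if WW E hbar k l k' l' = 0 then Re (amp U \<rho> n k l * cnj (amp U \<rho> n k' l')) else 0))) at_top"
      unfolding F_def by (rule FF_avg[OF finB])
    moreover have "(\<Sum>n<D. \<Sum>k'\<in>Bj j. \<Sum>k\<in>Bj j. \<Sum>l'\<in>Bj j. \<Sum>l\<in>Bj j.
        (if WW E hbar k l k' l' = 0 then Re (amp U \<rho> n k l * cnj (amp U \<rho> n k' l')) else 0)) \<le> 2 * thr j"
      by (rule limit_bound[OF rho U BjD hbar ns ng]) (use thr0 in \<open>auto simp: Bj_def less_imp_le\<close>)
    ultimately show ?thesis using thr0[of j] by (intro exI[of _ "(\<Sum>n<D. \<Sum>k'\<in>Bj j. \<Sum>k\<in>Bj j. \<Sum>l'\<in>Bj j. \<Sum>l\<in>Bj j.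
        (if WW E hbar k l k' l' = 0 then Re (amp U \<rho> n k l * cnj (amp U \<rho> n k' l')) else 0))"]) auto
  qed
  have ev1: "\<forall>\<^sub>F T in at_top. avg (F j) T < 3 * thr j" for j
    using lim[of j] order_tendstoD(2) by blast
  have ev: "\<forall>\<^sub>F T in at_top. (\<forall>j\<in>{1..J}. avg (F j) T < 3 * thr j) \<and> T > 0"
    using eventually_ball_finite[of "{1..J}", OF _ ballI[OF ev1]] eventually_gt_at_top[of 0]
    by (auto intro: eventually_conj)
  show ?thesis
    using ev
  proof eventually_elim
    case (elim T)
    then have T: "T > 0" and avgb: "\<And>j. j \<in> {1..J} \<Longrightarrow> avg (F j) T < 3 * thr j" by auto
    define bad where "bad j = {\<tau> \<in> {0..T}. \<beta> * ee j \<le> F j \<tau>}" for j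
    define P where "P = {\<tau> \<in> {0..T}. c \<le> diag_entropy D (rho_prime_diag D hbar E U \<rho> \<tau>)}"
    have a0: "\<beta> * ee j > 0" for j using \<beta> ee0 by simp
    have bad_meas: "bad j \<in> sets lborel" for j
      unfolding bad_def F_def using T by (intro markov_time(1) a0 FF_cont FF_nonneg) auto
    have bad_le: "measure lborel (bad j) \<le> T * (3 * exp (- h) / \<beta>)" if j: "j \<in> {1..J}" for j
    proof -
      have "measure lborel (bad j) \<le> integral {0..T} (F j) / (\<beta> * ee j)"
        unfolding bad_def F_def using T by (intro markov_time(2) a0 FF_cont FF_nonneg) auto
      also have "integral {0..T} (F j) = avg (F j) T * T" using T unfolding avg_def by simp
      also have "avg (F j) T * T / (\<beta> * ee j) \<le> 3 * thr j * T / (\<beta> * ee j)"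
        using avgb[OF j] T a0[of j] by (intro divide_right_mono mult_right_mono) auto
      also have "3 * thr j * T / (\<beta> * ee j) = T * (3 * exp (- h) / \<beta>)"
        unfolding thr_ee using ee0[of j] \<beta> by (simp add: field_simps)
      finally show ?thesis .
    qed
    have sub: "{0..T} - (\<Union>j\<in>{1..J}. bad j) \<subseteq> P"
    proof
      fix \<tau> assume \<tau>: "\<tau> \<in> {0..T} - (\<Union>j\<in>{1..J}. bad j)"
      have Fb: "F j \<tau> \<le> \<beta> * ee j" if j: "j \<in> {1..J}" for j
      proof -
        have "\<tau> \<notin> bad j" using \<tau> j by blast
        then show ?thesis using \<tau> unfolding bad_def by auto
      qed
      have lev: "(\<Sum>n<D. if rho_prime_diag D hbar E U \<rho> \<tau> n > exp (- (real j * h)) then rho_prime_diag D hbar E U \<rho> \<tau> n else 0)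
       \<le> (\<Sum>k<D. if Re (\<rho> k k) > exp (- (real (Suc j) * h)) then Re (\<rho> k k) else 0) + \<eta>"
        if j: "j \<in> {1..J}" for j
        unfolding \<eta>_def
        by (rule level_ineq[OF rho U s _ \<beta>]) (use Fb[OF j] in \<open>auto simp: F_def Bj_def thr_def ee_def\<close>)
      have "c0 \<le> diag_entropy D (rho_prime_diag D hbar E U \<rho> \<tau>)"
        unfolding c0_def
        by (rule entropy_levels[OF _ _ _ _ h lev])
          (auto intro: diag_nonneg[OF rho] diag_sum[OF rho] q_facts[OF rho U])
      then show "\<tau> \<in> P" using \<tau> cc0 unfolding P_def by auto
    qed
    have P_meas: "P \<in> sets lborel"
    proof -
      have "P = {0..T} \<inter> {\<tau>. c \<le> diag_entropy D (rho_prime_diag D hbar E U \<rho> \<tau>)}" unfolding P_def by auto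
      moreover have "{\<tau>. c \<le> diag_entropy D (rho_prime_diag D hbar E U \<rho> \<tau>)} \<in> sets borel"
      proof -
        have hb: "hbar \<noteq> 0" using hbar by simp
        note [measurable] = entropy_measurable[OF hb, of D E U \<rho>]
        show ?thesis by measurable
      qed
      ultimately show ?thesis by simp
    qed
    have P_fm: "P \<in> fmeasurable lborel"
      by (rule fmeasurableI2[OF Icc_fmeas[of T] _ P_meas]) (auto simp: P_def)
    have Ubad: "(\<Union>j\<in>{1..J}. bad j) \<in> sets lborel" using bad_meas by auto
    have Ubad_sub: "(\<Union>j\<in>{1..J}. bad j) \<subseteq> {0..T}" unfolding bad_def by auto
    have "measure lborel ({0..T} - (\<Union>j\<in>{1..J}. bad j)) = T - measure lborel (\<Union>j\<in>{1..J}. bad j)"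
    proof -
      have "measure lborel ({0..T} - (\<Union>j\<in>{1..J}. bad j)) = measure lborel {0..T} - measure lborel (\<Union>j\<in>{1..J}. bad j)"
        by (rule measure_Diff) (use Ubad Ubad_sub in \<open>auto simp: emeasure_lborel_Icc_eq\<close>)
      then show ?thesis using T Icc_meas by simp
    qed
    note mD = this
    have "measure lborel (\<Union>j\<in>{1..J}. bad j) \<le> (\<Sum>j\<in>{1..J}. measure lborel (bad j))"
      by (rule measure_UNION_le) (use bad_meas in auto)
    also have "\<dots> \<le> (\<Sum>j\<in>{1..J}. T * (3 * exp (- h) / \<beta>))" by (intro sum_mono bad_le)
    also have "\<dots> = T * (real J * (3 * exp (- h) / \<beta>))" by simp
    finally have mU: "measure lborel (\<Union>j\<in>{1..J}. bad j) \<le> T * (real J * (3 * exp (- h) / \<beta>))" .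
    have "T * (1 - real J * (3 * exp (- h) / \<beta>)) \<le> measure lborel ({0..T} - (\<Union>j\<in>{1..J}. bad j))"
      unfolding mD using mU by (simp add: algebra_simps)
    also have "\<dots> \<le> measure lborel P"
      by (rule measure_mono_fmeasurable[OF sub _ P_fm]) (use Ubad in auto)
    finally have "T * (1 - real J * (3 * exp (- h) / \<beta>)) \<le> measure lborel P" .
    then show ?case unfolding time_fraction_def P_def[symmetric] using T by (simp add: field_simps)
  qed
qed

theorem corollary2:
  fixes d :: nat and c hbar :: real
    and E E' :: "nat \<Rightarrow> nat \<Rightarrow> real"
    and \<rho>0 U :: "nat \<Rightarrow> nat \<Rightarrow> nat \<Rightarrow> complex"
  assumes d2: "d \<ge> 2" and cpos: "c > 0" and hbar: "hbar > 0"
    and A: "\<forall>N\<ge>1. nondegenerate_spectrum (d ^ N) (E N) \<and> nondegenerate_spectrum (d ^ N) (E' N)"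
    and B: "\<forall>N\<ge>1. nondegenerate_gaps (d ^ N) (E N) \<and> nondegenerate_gaps (d ^ N) (E' N)"
    and rho: "\<forall>N\<ge>1. density_matrix (d ^ N) (\<rho>0 N)"
    and U: "\<forall>N\<ge>1. unitary_matrix (d ^ N) (U N)"
    and Deff: "\<forall>N\<ge>1. 1 / (\<Sum>n<d ^ N. (Re (\<rho>0 N n n))\<^sup>2) \<ge> exp (c * real N)"
  shows "\<forall>\<epsilon>>0. \<forall>\<delta>>0. \<forall>\<^sub>F N in sequentially. \<forall>\<^sub>F T in at_top.
           time_fraction
             (\<lambda>\<tau>. diag_entropy (d ^ N) (rho_prime_diag (d ^ N) hbar (E N) (U N) (\<rho>0 N) \<tau>)
                   \<ge> diag_entropy (d ^ N) (\<lambda>n. Re (\<rho>0 N n n)) - \<epsilon> * real N) T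
           \<ge> 1 - \<delta>"
proof (intro allI impI)
  fix \<epsilon> \<delta> :: real assume \<epsilon>: "\<epsilon> > 0" and \<delta>: "\<delta> > 0"
  define L where "L = ln (real d)"
  have dpos: "real d > 0" using d2 by simp
  have L0: "L > 0" unfolding L_def using d2 by simp
  define J :: nat where "J = nat \<lceil>8 * (L + 1) / \<epsilon>\<rceil> + 1"
  have J8: "real J \<ge> 8 * (L + 1) / \<epsilon>" unfolding J_def by linarith
  have J1: "real J \<ge> 1" unfolding J_def by simp
  define s where "s = 1 / (2 * real J)"
  define \<beta> where "\<beta> = (1 / (2 * real J * (1 + 2 * real J)))\<^sup>2"
  have s0: "s > 0" unfolding s_def using J1 by simp
  have \<beta>0: "\<beta> > 0" unfolding \<beta>_def using J1 by simp
  have sq: "sqrt \<beta> = 1 / (2 * real J * (1 + 2 * real J))" unfolding \<beta>_def using J1 by simp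
  have eta: "s + (1 + 1/s) * sqrt \<beta> = 1 / real J"
  proof -
    have jp: "real J > 0" using J1 by simp
    have gen: "1/a + (1 + 1/(1/a)) * (1 / (a * (1 + a))) = 2 / a" if "a \<noteq> 0" "1 + a \<noteq> 0" for a :: real
    proof -
      have nz: "a * (1 + a) \<noteq> 0" using that by simp
      have e1: "1/(1/a) = a" by simp
      have e2: "(1 + a) * (1 / (a * (1 + a))) = 1 / a"
      proof -
        have "(1 + a) * (1 / (a * (1 + a))) = (1 + a) / (a * (1 + a))" by simp
        also have "\<dots> = 1 / a" using nz that(1) by (subst frac_eq_eq) (auto simp: algebra_simps)
        finally show ?thesis .
      qed
      show ?thesis unfolding e1 e2 by simp
    qed
    have "s + (1 + 1/s) * sqrt \<beta> = 2 / (2 * real J)"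
      unfolding sq s_def by (rule gen) (use jp in auto)
    also have "\<dots> = 1 / real J" using jp by simp
    finally show ?thesis .
  qed
  have ev1: "\<forall>\<^sub>F N in sequentially. real J * (3 * exp (- (\<epsilon> * real N / 4)) / \<beta>) < \<delta>"
  proof -
    have "((\<lambda>x::real. exp (- (\<epsilon> * x / 4))) \<longlongrightarrow> 0) at_top"
      using \<epsilon> by real_asymp
    then have "((\<lambda>N. exp (- (\<epsilon> * real N / 4))) \<longlongrightarrow> 0) sequentially"
      by (rule filterlim_compose) (rule filterlim_real_sequentially)
    then have "((\<lambda>N. real J * (3 * exp (- (\<epsilon> * real N / 4)) / \<beta>)) \<longlongrightarrow> real J * (3 * 0 / \<beta>)) sequentially"
      using \<beta>0 by (intro tendsto_intros) auto
    then have "((\<lambda>N. real J * (3 * exp (- (\<epsilon> * real N / 4)) / \<beta>)) \<longlongrightarrow> 0) sequentially" by simp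
    then show ?thesis using \<delta> order_tendstoD(2) by blast
  qed
  have ev2: "\<forall>\<^sub>F N in sequentially. 2 * exp (- real N) \<le> \<epsilon> * real N / 4"
  proof -
    have "filterlim (\<lambda>x::real. \<epsilon> * x / 4 - 2 * exp (- x)) at_top at_top"
      using \<epsilon> by real_asymp
    then have "filterlim (\<lambda>N. \<epsilon> * real N / 4 - 2 * exp (- real N)) at_top sequentially"
      by (rule filterlim_compose) (rule filterlim_real_sequentially)
    then have "\<forall>\<^sub>F N in sequentially. \<epsilon> * real N / 4 - 2 * exp (- real N) \<ge> 0"
      unfolding filterlim_at_top by blast
    then show ?thesis by (rule eventually_mono) simp
  qed
  have ev3: "\<forall>\<^sub>F N in sequentially. N \<ge> 1" by (rule eventually_ge_at_top)
  show "\<forall>\<^sub>F N in sequentially. \<forall>\<^sub>F T in at_top.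
           time_fraction
             (\<lambda>\<tau>. diag_entropy (d ^ N) (rho_prime_diag (d ^ N) hbar (E N) (U N) (\<rho>0 N) \<tau>)
                   \<ge> diag_entropy (d ^ N) (\<lambda>n. Re (\<rho>0 N n n)) - \<epsilon> * real N) T
           \<ge> 1 - \<delta>"
    using ev1 ev2 ev3
  proof eventually_elim
    case (elim N)
    then have N1: "N \<ge> 1" and e1: "real J * (3 * exp (- (\<epsilon> * real N / 4)) / \<beta>) < \<delta>"
      and e2: "2 * exp (- real N) \<le> \<epsilon> * real N / 4" by auto
    define h where "h = \<epsilon> * real N / 4"
    have h0: "h > 0" unfolding h_def using \<epsilon> N1 by simp
    have Dexp: "real (d ^ N) * exp (- (real J * h) / 2) \<le> exp (- real N)"
    proof -
      have "real (d ^ N) = exp (real N * L)"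
        unfolding L_def using dpos by (simp add: ln_realpow[symmetric] of_nat_power)
      then have "real (d ^ N) * exp (- (real J * h) / 2) = exp (real N * L + - (real J * h) / 2)"
        by (simp only: exp_add)
      also have "real N * L + - (real J * h) / 2 = real N * L - real J * h / 2" by simp
      also have "real N * L - real J * h / 2 \<le> - real N"
      proof -
        have "real J * \<epsilon> \<ge> 8 * (L + 1)" using J8 \<epsilon> by (simp add: field_simps)
        then have "real J * \<epsilon> * real N \<ge> 8 * (L + 1) * real N" by (intro mult_right_mono) auto
        then show ?thesis unfolding h_def by (simp add: algebra_simps)
      qed
      finally show ?thesis by simp
    qed
    have cle: "diag_entropy (d ^ N) (\<lambda>n. Re (\<rho>0 N n n)) - \<epsilon> * real N
      \<le> diag_entropy (d ^ N) (\<lambda>n. Re (\<rho>0 N n n)) - 2 * h - h * real J * (s + (1 + 1/s) * sqrt \<beta>)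
         - 2 * real (d ^ N) * exp (- (real J * h) / 2)"
    proof -
      have "h * real J * (s + (1 + 1/s) * sqrt \<beta>) = h" unfolding eta using J1 by simp
      moreover have "2 * real (d ^ N) * exp (- (real J * h) / 2) \<le> h"
        using Dexp e2 unfolding h_def by linarith
      ultimately show ?thesis unfolding h_def by linarith
    qed
    have "\<forall>\<^sub>F T in at_top. time_fraction (\<lambda>\<tau>. diag_entropy (d ^ N) (rho_prime_diag (d ^ N) hbar (E N) (U N) (\<rho>0 N) \<tau>)
      \<ge> diag_entropy (d ^ N) (\<lambda>n. Re (\<rho>0 N n n)) - \<epsilon> * real N) T \<ge> 1 - real J * (3 * exp (- h) / \<beta>)"
      using rho U A B N1 hbar h0 s0 \<beta>0 cle by (intro fixed_N) auto
    then show ?case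
    proof (rule eventually_mono)
      fix T assume "1 - real J * (3 * exp (- h) / \<beta>) \<le> time_fraction (\<lambda>\<tau>. diag_entropy (d ^ N) (rho_prime_diag (d ^ N) hbar (E N) (U N) (\<rho>0 N) \<tau>)
      \<ge> diag_entropy (d ^ N) (\<lambda>n. Re (\<rho>0 N n n)) - \<epsilon> * real N) T"
      then show "1 - \<delta> \<le> time_fraction (\<lambda>\<tau>. diag_entropy (d ^ N) (rho_prime_diag (d ^ N) hbar (E N) (U N) (\<rho>0 N) \<tau>)
      \<ge> diag_entropy (d ^ N) (\<lambda>n. Re (\<rho>0 N n n)) - \<epsilon> * real N) T"
        using e1 unfolding h_def by linarith
    qed
  qed
qed

end
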